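(* Let $k\ge1$, let $p,q_1,\dots,q_k$ be primes with $p<q_1<\cdots<q_k$, and let $a$ be a positive integer. If $p^{a-2}>q_1\cdots q_{k-1}q_k^2$, then $p^a$ reduces to $p^bq_1\cdots q_k$, where $$b=\left\lfloor\frac12\left(a-\frac{\log(q_1\cdots q_{k-1})}{\log p}\right)\right\rfloor$$ (the empty product being $1$).
   Context: For a positive integer $n$, $\mathcal{D}(n)$ is the set of positive divisors of $n$, and $\lambda(n)$ is the least prime factor of $n$ if $n\ge2$, with $\lambda(1)=1$. For positive integers $m,n$, a function $f:\mathcal{D}(n)\to\mathcal{D}(m)$ is called reducing if for all $d,d'\in\mathcal{D}(n)$: (a) $f(d)\le d$; (b) $\frac{m/f(d)}{n/d}\le\min\{1,\ \lambda(m/f(d))/\lambda(n/d)\}$; (c) if $f(d)=2^if(d')$ for some $i\in\mathbb{Z}$, then $d=2^jd'$ for some $j\in\mathbb{Z}$. We say $n$ reduces to $m$ if a reducing function $\mathcal{D}(n)\to\mathcal{D}(m)$ exists. *)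

theory Defs
  imports "HOL-Computational_Algebra.Primes" Complex_Main
begin

definition divisors_set :: "nat \<Rightarrow> nat set" where
  "divisors_set n = {d. 0 < d \<and> d dvd n}"

definition least_pf :: "nat \<Rightarrow> nat" where
  "least_pf n = (if n \<ge> 2 then (LEAST p. prime p \<and> p dvd n) else 1)"

definition reducing :: "nat \<Rightarrow> nat \<Rightarrow> (nat \<Rightarrow> nat) \<Rightarrow> bool" where
  "reducing n m f \<longleftrightarrow>
     (\<forall>d\<in>divisors_set n. f d \<in> divisors_set m) \<and>
     (\<forall>d\<in>divisors_set n. f d \<le> d) \<and>
     (\<forall>d\<in>divisors_set n.
        (real (m div f d) / real (n div d))
          \<le> min 1 (real (least_pf (m div f d)) / real (least_pf (n div d)))) \<and>
     (\<forall>d\<in>divisors_set n. \<forall>d'\<in>divisors_set n.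
        (\<exists>i::int. real (f d) = 2 powi i * real (f d')) \<longrightarrow>
        (\<exists>j::int. real d = 2 powi j * real d'))"

definition reduces_to :: "nat \<Rightarrow> nat \<Rightarrow> bool" where
  "reduces_to n m \<longleftrightarrow> (\<exists>f. reducing n m f)"

end

theory Submission
  imports Defs
begin


lemma pow_split_eq:
  fixes p :: nat
  assumes "prime p" "p ^ j * X = p ^ j' * X'" "\<not> p dvd X" "\<not> p dvd X'"
  shows "j = j' \<and> X = X'"
proof -
  have X0: "X \<noteq> 0" "X' \<noteq> 0" using assms(3,4) dvd_0_right by metis+
  have "multiplicity p (p ^ j * X) = j"
    using assms(1,3,4) X0 by (simp add: prime_elem_multiplicity_mult_distrib not_dvd_imp_multiplicity_0)
  moreover have "multiplicity p (p ^ j' * X') = j'"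
    using assms(1,3,4) X0 by (simp add: prime_elem_multiplicity_mult_distrib not_dvd_imp_multiplicity_0)
  ultimately have "j = j'" using assms(2) by simp
  with assms(1,2) show ?thesis by (simp add: prime_gt_0_nat)
qed

lemma least_pf_pow:
  fixes p :: nat
  assumes "prime p" "c \<ge> 1"
  shows "least_pf (p ^ c) = p"
proof -
  have "p ^ c \<ge> 2"
    using assms by (metis One_nat_def dual_order.trans le_add2 nat_le_linear one_add_one power_one_right power_increasing prime_ge_2_nat prime_gt_0_nat Suc_leI)
  moreover have "(LEAST r. prime r \<and> r dvd p ^ c) = p"
  proof (rule Least_equality)
    show "prime p \<and> p dvd p ^ c" using assms by (simp add: dvd_power)
    show "\<And>y. prime y \<and> y dvd p ^ c \<Longrightarrow> p \<le> y"
      using assms by (metis order.refl prime_dvd_power primes_dvd_imp_eq)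
  qed
  ultimately show ?thesis unfolding least_pf_def by simp
qed

lemma least_pf_ge:
  fixes M p :: nat
  assumes "M \<ge> 2" "\<And>r. prime r \<Longrightarrow> r dvd M \<Longrightarrow> p \<le> r"
  shows "p \<le> least_pf M"
proof -
  obtain r where r: "prime r" "r dvd M" using assms(1) prime_factor_nat[of M] by auto
  have "prime (LEAST r. prime r \<and> r dvd M) \<and> (LEAST r. prime r \<and> r dvd M) dvd M"
    by (rule LeastI[of _ r]) (use r in auto)
  then show ?thesis using assms unfolding least_pf_def by auto
qed

lemma powi2_nat:
  fixes x y :: nat and i :: int
  assumes "real x = 2 powi i * real y" "odd x" "odd y"
  shows "x = y"
proof (cases "i \<ge> 0")
  case True
  then obtain n where n: "i = int n" using nonneg_int_cases by blast
  then have "real x = real (2 ^ n * y)" using assms(1) by (simp add: power_int_of_nat)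
  then have "x = 2 ^ n * y" by (simp only: of_nat_eq_iff)
  then show ?thesis using assms(2) by (cases n) auto
next
  case False
  then obtain n where n: "i = - int n" by (metis nonpos_int_cases linorder_not_le less_imp_le)
  then have "real y = real (2 ^ n * x)" using assms(1) by (simp add: power_int_minus field_simps)
  then have "y = 2 ^ n * x" by (simp only: of_nat_eq_iff)
  then show ?thesis using assms(3) by (cases n) auto
qed

lemma reduces_from_M:
  fixes p a m :: nat and M :: "nat \<Rightarrow> nat"
  assumes p: "prime p" and m0: "m > 0"
   and dv: "\<forall>c\<le>a. M c dvd m"
   and lo: "\<forall>c\<le>a. m \<le> p^(a-c) * M c"
   and hi: "\<forall>c\<le>a. M c \<le> p^c"
   and pr: "\<forall>r. prime r \<and> r dvd m \<longrightarrow> p \<le> r"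
   and inj: "inj_on M {..a}"
   and par: "p = 2 \<or> odd m"
  shows "reduces_to (p^a) m"
proof -
  define f where "f d = m div M (a - multiplicity p d)" for d
  have p0: "p > 0" "p \<ge> 2" using p prime_gt_0_nat prime_ge_2_nat by auto
  have Mpos: "M c > 0" if "c \<le> a" for c using dv that m0 by (metis dvd_0_left_iff gr0I)
  have fdv: "m div M c dvd m \<and> m div M c > 0" if cc: "c \<le> a" for c
  proof -
    obtain k where k: "m = M c * k" using dv cc by blast
    then have "k > 0" using m0 by (metis gr0I mult_0_right)
    then show ?thesis using k Mpos[OF cc] by simp
  qed
  have key: "\<exists>e\<le>a. d = p^e \<and> f d = m div M (a-e)" if "d \<in> divisors_set (p^a)" for d
  proof -
    from that have "d dvd p^a" by (simp add: divisors_set_def)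
    then obtain e where "e \<le> a" "d = p^e" using divides_primepow_nat[OF p] by auto
    then show ?thesis using p by (auto simp: f_def)
  qed
  have divdiv: "m div (m div M c) = M c" if cc: "c \<le> a" for c
  proof -
    obtain k where k: "m = M c * k" using dv cc by blast
    then have "k > 0" using m0 by (metis gr0I mult_0_right)
    then show ?thesis using k Mpos[OF cc] by simp
  qed
  have pad: "p^a div p^e = p^(a-e)" if "e \<le> a" for e
    using that p0 by (simp add: power_diff)
  have ratio: "real (M c) / real (p^c) \<le> min 1 (real (least_pf (M c)) / real (least_pf (p^c)))"
    if c: "c \<le> a" for c
  proof (cases "c = 0")
    case True
    have "M c \<le> 1" using hi c True by auto
    then have "M c = 1" using Mpos[OF c] by linarith
    then show ?thesis using True by (simp add: least_pf_def)
  next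
    case False
    then have lp: "least_pf (p^c) = p" using least_pf_pow[OF p] by simp
    have pc: "p \<le> p^c" using False p0 by (metis One_nat_def Suc_leI neq0_conv power_increasing power_one_right)
    have le1: "real (M c) / real (p^c) \<le> 1" using hi c p0 by simp
    show ?thesis
    proof (cases "M c = 1")
      case True
      then have "least_pf (M c) = 1" by (simp add: least_pf_def)
      moreover have "1 / real (p^c) \<le> 1 / real p" using pc p0 by (simp add: frac_le)
      ultimately show ?thesis using True lp le1 by simp
    next
      case False
      then have "M c \<ge> 2" using Mpos[OF c] by linarith
      moreover have "\<And>r. prime r \<Longrightarrow> r dvd M c \<Longrightarrow> p \<le> r"
        using pr dv c by (meson dvd_trans)
      ultimately have "p \<le> least_pf (M c)" by (rule least_pf_ge)
      then have "1 \<le> real (least_pf (M c)) / real p" using p0 by simp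
      then show ?thesis using lp le1 by simp
    qed
  qed
  have fodd: "odd (f d)" if om: "odd m" and dd: "d \<in> divisors_set (p^a)" for d
  proof -
    obtain e where e: "e \<le> a" "f d = m div M (a-e)" using key[OF dd] by auto
    have "f d dvd m" using e fdv[of "a-e"] by simp
    then show ?thesis using om by (meson dvd_trans)
  qed
  have "reducing (p^a) m f"
    unfolding reducing_def
  proof (intro conjI ballI impI)
    fix d assume d: "d \<in> divisors_set (p^a)"
    obtain e where e: "e \<le> a" "d = p^e" "f d = m div M (a-e)" using key[OF d] by auto
    have c: "a - e \<le> a" by simp
    show "f d \<in> divisors_set m"
      unfolding divisors_set_def using e fdv[OF c] by simp
    show "f d \<le> d"
    proof -
      have "m \<le> p^e * M (a-e)" using lo[rule_format, OF c] e(1) by simp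
      then have "m div M (a-e) \<le> (p^e * M (a-e)) div M (a-e)" by (rule div_le_mono)
      then show ?thesis using e Mpos[OF c] by simp
    qed
    show "real (m div f d) / real (p^a div d) \<le> min 1 (real (least_pf (m div f d)) / real (least_pf (p^a div d)))"
    proof -
      have "m div f d = M (a-e)" using e(3) divdiv[OF c] by simp
      moreover have "p^a div d = p^(a-e)" using e(2) pad[OF e(1)] by simp
      ultimately show ?thesis using ratio[OF c] by simp
    qed
  next
    fix d d' assume d: "d \<in> divisors_set (p^a)" and d': "d' \<in> divisors_set (p^a)"
      and ex: "\<exists>i::int. real (f d) = 2 powi i * real (f d')"
    obtain e where e: "e \<le> a" "d = p^e" "f d = m div M (a-e)" using key[OF d] by auto
    obtain e' where e': "e' \<le> a" "d' = p^e'" "f d' = m div M (a-e')" using key[OF d'] by auto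
    show "\<exists>j::int. real d = 2 powi j * real d'"
    proof (cases "p = 2")
      case True
      have "(2::real) powi (int e - int e' + int e') = 2 powi (int e - int e') * 2 powi (int e')"
        by (rule power_int_add) simp
      then have X: "(2::real) powi (int e - int e') * 2 ^ e' = 2 ^ e" by (simp add: power_int_of_nat)
      have D: "real d = 2 ^ e" "real d' = 2 ^ e'" using True e(2) e'(2) by simp_all
      have "real d = 2 powi (int e - int e') * real d'" unfolding D by (rule X[symmetric])
      then show ?thesis by blast
    next
      case False
      then have om: "odd m" using par by simp
      from ex obtain i where i: "real (f d) = 2 powi i * real (f d')" by auto
      have "f d = f d'" using powi2_nat[OF i fodd[OF om d] fodd[OF om d']] .
      then have "m div (m div M (a-e)) = m div (m div M (a-e'))" using e(3) e'(3) by simp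
      then have "M (a-e) = M (a-e')" using divdiv[of "a-e"] divdiv[of "a-e'"] by simp
      then have "a - e = a - e'" by (rule inj_onD[OF inj]) auto
      then have "e = e'" using e e' by simp
      then have "real d = 2 powi 0 * real d'" using e(2) e'(2) by simp
      then show ?thesis by blast
    qed
  qed
  then show ?thesis unfolding reduces_to_def by blast
qed



lemma floor_part:
  fixes p P a :: nat
  assumes p: "prime p" and P1: "P \<ge> 1" and Pa: "P \<le> p^a"
  defines "b \<equiv> nat \<lfloor>(real a - ln (real P) / ln (real p)) / 2\<rfloor>"
  shows "p^(2*b) * P \<le> p^a \<and> p^a < p^(2*b+2) * P"
proof -
  have p2: "real p \<ge> 2" using prime_ge_2_nat[OF p] by simp
  have lp: "ln (real p) > 0" using p2 by simp
  have lnpow: "ln (real (p^n)) = real n * ln (real p)" for n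
    using p2 by (simp add: ln_realpow)
  have lnmul: "ln (real (p^n * P)) = real n * ln (real p) + ln (real P)" for n
    using p2 P1 by (simp add: ln_mult ln_realpow)
  define L where "L = ln (real P) / ln (real p)"
  have r: "real P \<le> real (p^a)" "0 < real P" using Pa P1 by (simp only: of_nat_le_iff, simp)
  have "ln (real P) \<le> ln (real (p^a))" using ln_le_cancel_iff[of "real P" "real (p^a)"] r by linarith
  then have "L \<le> real a" using lp unfolding L_def lnpow by (simp add: divide_le_eq)
  then have x0: "(real a - L) / 2 \<ge> 0" by simp
  have bb: "real b = of_int \<lfloor>(real a - L) / 2\<rfloor>" unfolding b_def L_def[symmetric] using x0 by simp
  have b1: "real b \<le> (real a - L) / 2" using bb by linarith
  have b2: "(real a - L) / 2 < real b + 1" using bb by linarith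
  have "real (2*b) * ln (real p) + ln (real P) \<le> real a * ln (real p)"
  proof -
    have "real (2*b) \<le> real a - L" using b1 by simp
    then have "real (2*b) * ln (real p) \<le> (real a - L) * ln (real p)" using lp by (simp add: mult_right_mono)
    also have "\<dots> = real a * ln (real p) - ln (real P)" using lp unfolding L_def by (simp add: field_simps)
    finally show ?thesis by simp
  qed
  then have "ln (real (p^(2*b) * P)) \<le> ln (real (p^a))" unfolding lnmul lnpow .
  then have A: "p^(2*b) * P \<le> p^a" using P1 p2 by (simp del: of_nat_mult of_nat_power)
  have "real a * ln (real p) < real (2*b+2) * ln (real p) + ln (real P)"
  proof -
    have "real a - L < real (2*b+2)" using b2 by simp
    then have "(real a - L) * ln (real p) < real (2*b+2) * ln (real p)" using lp by (simp add: mult_strict_right_mono)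
    also have "(real a - L) * ln (real p) = real a * ln (real p) - ln (real P)" using lp unfolding L_def by (simp add: field_simps)
    finally show ?thesis by simp
  qed
  then have "ln (real (p^a)) < ln (real (p^(2*b+2) * P))" unfolding lnmul lnpow .
  then have B: "p^a < p^(2*b+2) * P" using P1 p2 by (simp del: of_nat_mult of_nat_power)
  show ?thesis using A B by simp
qed



theorem lemma3p9:
  fixes p a k :: nat and q :: "nat \<Rightarrow> nat"
  assumes "k \<ge> 1"
    and "prime p"
    and "\<forall>i\<in>{1..k}. prime (q i)"
    and "p < q 1"
    and "\<forall>i\<in>{1..<k}. q i < q (Suc i)"
    and "a > 0"
    and "real p powi (int a - 2) > real ((\<Prod>i\<in>{1..<k}. q i) * q k ^ 2)"
  shows "reduces_to (p ^ a)
           (p ^ nat \<lfloor>(real a - ln (real (\<Prod>i\<in>{1..<k}. q i)) / ln (real p)) / 2\<rfloor>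
              * (\<Prod>i\<in>{1..k}. q i))"
proof -
  note k1 = assms(1) and pr = assms(2)
  define P where "P = (\<Prod>i\<in>{1..<k}. q i)"
  define Q where "Q = (\<Prod>i\<in>{1..k}. q i)"
  define b where "b = nat \<lfloor>(real a - ln (real P) / ln (real p)) / 2\<rfloor>"
  have p2: "p \<ge> 2" using pr prime_ge_2_nat by blast
  have qprime: "prime (q i)" if "1 \<le> i" "i \<le> k" for i using assms(3) that by auto
  have qmono0: "\<forall>i. j \<le> k \<longrightarrow> 1 \<le> i \<longrightarrow> i < j \<longrightarrow> q i < q j" for j
  proof (induction j)
    case 0 then show ?case by simp
  next
    case (Suc j)
    show ?case
    proof (intro allI impI)
      fix i assume h: "Suc j \<le> k" "1 \<le> i" "i < Suc j"
      have st: "q j < q (Suc j)" if "1 \<le> j" using assms(5) h that by auto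
      show "q i < q (Suc j)"
      proof (cases "i = j")
        case True then show ?thesis using st h by simp
      next
        case False
        then have "q i < q j" using Suc.IH h by auto
        then show ?thesis using st h False by simp
      qed
    qed
  qed
  have qmono: "q i < q j" if "1 \<le> i" "i < j" "j \<le> k" for i j using qmono0 that by blast
  have qgt: "p < q i" if "1 \<le> i" "i \<le> k" for i
    using assms(4) qmono[of 1 i] that by (cases "i = 1") auto
  have qle: "q i \<le> q k" if "1 \<le> i" "i \<le> k" for i
    using qmono[of i k] that by (cases "i = k") auto
  have QP: "Q = P * q k"
  proof -
    have "{1..k} = {1..<Suc k}" by auto
    then show ?thesis unfolding Q_def P_def using k1 by (simp add: prod.atLeastLessThan_Suc)
  qed
  have Ppos: "P \<ge> 1" unfolding P_def using qgt
    by (metis (no_types, lifting) One_nat_def Suc_leI atLeastLessThan_iff less_imp_le_nat prod_pos gr_implies_not0 not_gr0)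
  have qk: "q k > p" using qgt k1 by simp
  have A7: "real (P * q k ^ 2) < real p powi (int a - 2)" using assms(7) unfolding P_def .
  have a2: "a \<ge> 2"
  proof (rule ccontr)
    assume "\<not> a \<ge> 2"
    then have "a = 1" using assms(6) by simp
    then have "real p powi (int a - 2) = 1 / real p" by (simp add: power_int_minus inverse_eq_divide)
    also have "\<dots> < 1" using p2 by simp
    also have "1 \<le> real (P * q k ^ 2)"
    proof -
      have n1: "0 < P * q k ^ 2" using Ppos qk by simp
      then show ?thesis by (metis Suc_leI One_nat_def of_nat_1 of_nat_le_iff)
    qed
    finally have "real p powi (int a - 2) < real (P * q k ^ 2)" .
    then show False using A7 by linarith
  qed
  have "real p powi (int a - 2) = real (p ^ (a - 2))"
  proof -
    have "int a - 2 = int (a - 2)" using a2 by simp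
    then show ?thesis unfolding power_int_of_nat of_nat_power by (simp only: power_int_of_nat)
  qed
  then have hyp: "P * q k ^ 2 < p ^ (a - 2)" using A7 by (simp only: of_nat_less_iff)
  have pa2: "p^a = p^2 * p^(a-2)"
  proof -
    have "a = 2 + (a-2)" using a2 by simp
    then show ?thesis by (metis power_add)
  qed
  have Pa: "P \<le> p^a"
  proof -
    have "P \<le> P * q k ^ 2" using qk by simp
    also have "\<dots> < p^(a-2)" by (rule hyp)
    also have "\<dots> \<le> p^a" using p2 by (simp add: power_increasing)
    finally show ?thesis by simp
  qed
  have F: "p^(2*b) * P \<le> p^a" "p^a < p^(2*b+2) * P"
    using floor_part[OF pr Ppos Pa] unfolding b_def by blast+
  have F1: "q k < p^b"
  proof -
    have "p^2 * (P * q k ^ 2) < p^2 * p^(a-2)" using hyp p2 by simp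
    also have "\<dots> = p^a" using pa2 by simp
    also have "\<dots> < p^(2*b+2) * P" by (rule F(2))
    also have "\<dots> = p^2 * (P * (p^b)^2)"
    proof -
      have "p^(2*b) = (p^b)^2" by (metis power_mult mult.commute)
      then show ?thesis by (simp only: power_add mult_ac)
    qed
    finally have "P * q k ^ 2 < P * (p^b)^2" by simp
    then have "q k ^ 2 < (p^b)^2" by simp
    then show ?thesis using power_less_imp_less_base by blast
  qed
  have F2: "p^(b+1) * Q < p^a"
  proof -
    have "(p^(2*b) * P) * (p^2 * (P * q k ^ 2)) < p^a * p^a"
    proof (rule mult_le_less_imp_less)
      show "p^(2*b) * P \<le> p^a" by (rule F(1))
      show "p^2 * (P * q k ^ 2) < p^a" using hyp p2 pa2 by simp
      show "0 < p^(2*b) * P" using p2 Ppos by simp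
      show "0 \<le> p^2 * (P * q k ^ 2)" by simp
    qed
    moreover have "(p^(2*b) * P) * (p^2 * (P * q k ^ 2)) = (p^(b+1) * Q)^2"
    proof -
      have e1: "p^(2*b) = (p^b)^2" by (metis power_mult mult.commute)
      have e2: "p^(b+1) = p^b * p" by simp
      show ?thesis unfolding QP e1 e2 by (simp add: power2_eq_square mult_ac)
    qed
    moreover have "p^a * p^a = (p^a)^2" by (simp add: power2_eq_square)
    ultimately have "(p^(b+1) * Q)^2 < (p^a)^2" by simp
    then show ?thesis using power_less_imp_less_base by blast
  qed
  have Qpos: "Q \<ge> 1" using QP Ppos qk by simp
  have ba: "b + 1 < a"
  proof -
    have "p^(b+1) \<le> p^(b+1) * Q" using Qpos by simp
    then have "p^(b+1) < p^a" using F2 by linarith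
    moreover have "1 < p" using p2 by simp
    ultimately show ?thesis using power_less_imp_less_exp by blast
  qed
  have pQ: "p * Q \<le> p^(a-b)"
  proof -
    have "b + (a-b) = a" using ba by simp
    then have "p^b * p^(a-b) = p^a" by (metis power_add)
    moreover have "p^b * (p * Q) = p^(b+1) * Q" by simp
    ultimately have "p^b * (p * Q) < p^b * p^(a-b)" using F2 by (simp add: mult_ac)
    then show ?thesis by simp
  qed
  have "Q \<le> p * Q" using p2 by simp
  then have QF: "Q \<le> p^(a-b)" using pQ by linarith
  define D where "D i = (\<Prod>l\<in>{1..i}. q l)" for i
  have D0: "D 0 = 1" unfolding D_def by simp
  have DSuc: "D (Suc i) = D i * q (Suc i)" for i unfolding D_def by (simp add: prod.cl_ivl_Suc)
  have Dk: "D k = Q" unfolding D_def Q_def ..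
  have Dk1: "D (k-1) = P"
  proof -
    have "{1..k-1} = {1..<k}" using k1 by auto
    then show ?thesis unfolding D_def P_def by simp
  qed
  have Dpos: "D i > 0" if "i \<le> k" for i
    unfolding D_def by (rule prod_pos) (use qgt that in force)
  have Dstep: "D i < D (Suc i)" if "Suc i \<le> k" for i
  proof -
    have "q (Suc i) > 1" using qgt[of "Suc i"] that p2 by simp
    moreover have "D i > 0" using Dpos that by simp
    ultimately show ?thesis unfolding DSuc by simp
  qed
  have Dmono0: "\<forall>i. j \<le> k \<longrightarrow> i < j \<longrightarrow> D i < D j" for j
  proof (induction j)
    case 0 then show ?case by simp
  next
    case (Suc j)
    show ?case
    proof (intro allI impI)
      fix i assume h: "Suc j \<le> k" "i < Suc j"
      have st: "D j < D (Suc j)" using Dstep h by simp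
      show "D i < D (Suc j)"
      proof (cases "i = j")
        case True then show ?thesis using st by simp
      next
        case False
        then have "D i < D j" using Suc.IH h by auto
        then show ?thesis using st by simp
      qed
    qed
  qed
  have Dinj: "i = j" if "i \<le> k" "j \<le> k" "D i = D j" for i j
    using Dmono0 that by (metis less_irrefl nat_neq_iff)
  have Ddvd: "D i dvd Q" if "i \<le> k" for i
    unfolding D_def Q_def by (rule prod_dvd_prod_subset) (use that in auto)
  have Dndvd: "\<not> p dvd D i" if "i \<le> k" for i
  proof
    assume "p dvd D i"
    then have "\<exists>l\<in>{1..i}. p dvd q l" unfolding D_def using prime_dvd_prod_iff[OF _ pr, of "{1..i}" q] by simp
    then obtain l where l: "l \<in> {1..i}" "p dvd q l" by blast
    then have "p = q l" using qprime[of l] that pr primes_dvd_imp_eq by auto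
    then show False using qgt[of l] l that by auto
  qed
  define e where "e i = (LEAST x. D i \<le> p^x)" for i
  have e1: "D i \<le> p^(e i)" for i
  proof -
    have "D i < 2^(D i)" by (rule less_exp)
    also have "\<dots> \<le> p^(D i)" using p2 by (simp add: power_mono)
    finally have "D i \<le> p^(D i)" by simp
    then show ?thesis unfolding e_def by (rule LeastI)
  qed
  have e2: "e i \<le> x" if "D i \<le> p^x" for i x
    unfolding e_def using that by (rule Least_le)
  have e3: "p^(e i) \<le> p * D i" if "i \<le> k" for i
  proof (cases "e i")
    case 0 then show ?thesis using Dpos[OF that] p2 by (simp add: Suc_le_eq)
  next
    case (Suc y)
    then have "\<not> D i \<le> p^y" using e2[of i y] by auto
    then show ?thesis using Suc by simp
  qed
  have e0: "e 0 = 0" using e2[of 0 0] D0 by simp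
  have estep: "e (Suc i) \<le> e i + b" if "Suc i \<le> k" for i
  proof -
    have "q (Suc i) \<le> p^b" using qle[of "Suc i"] F1 that by simp
    then have "D i * q (Suc i) \<le> p^(e i) * p^b" using e1[of i] by (rule mult_le_mono[rotated])
    then have "D (Suc i) \<le> p^(e i + b)" unfolding DSuc by (simp add: power_add)
    then show ?thesis by (rule e2)
  qed
  have elast: "a \<le> e (k-1) + 2*b + 1"
  proof (rule ccontr)
    assume "\<not> a \<le> e (k-1) + 2*b + 1"
    then have "e (k-1) + (2*b+2) \<le> a" by simp
    then have "p^(e (k-1) + (2*b+2)) \<le> p^a" by (rule power_increasing) (use p2 in simp)
    moreover have "p^(2*b+2) * P \<le> p^(2*b+2) * p^(e (k-1))" using e1[of "k-1"] unfolding Dk1 by simp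
    moreover have "p^(2*b+2) * p^(e (k-1)) = p^(e (k-1) + (2*b+2))" by (simp add: power_add mult.commute)
    ultimately show False using F(2) by linarith
  qed
  define idx where "idx c = (if a - b \<le> c then k else Max {i. i < k \<and> e i \<le> c})" for c
  define E where "E j = (if j = k then a - b else e j)" for j
  define M where "M c = p^(c - E (idx c)) * D (idx c)" for c
  have K: "idx c \<le> k \<and> E (idx c) \<le> c \<and> c \<le> E (idx c) + b \<and> D (idx c) \<le> p^(E (idx c))
           \<and> Q * p^(E (idx c)) \<le> D (idx c) * p^(a-b)" if c: "c \<le> a" for c
  proof (cases "a - b \<le> c")
    case True
    then have "idx c = k" "E (idx c) = a - b" unfolding idx_def E_def by auto
    then show ?thesis using True c QF Dk by simp
  next
    case False
    define S where "S = {i. i < k \<and> e i \<le> c}"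
    have fin: "finite S" unfolding S_def by simp
    have S0: "0 \<in> S" unfolding S_def using k1 e0 by simp
    define i where "i = Max S"
    have iS: "i \<in> S" unfolding i_def using fin S0 Max_in by blast
    have ii: "idx c = i" unfolding idx_def i_def S_def using False by simp
    have ik: "i < k" "e i \<le> c" using iS unfolding S_def by auto
    have Ei: "E i = e i" unfolding E_def using ik by simp
    have cb: "c \<le> e i + b"
    proof (cases "Suc i < k")
      case True
      have "Suc i \<notin> S"
      proof
        assume "Suc i \<in> S"
        then have "Suc i \<le> i" unfolding i_def using fin by simp
        then show False by simp
      qed
      then have "c < e (Suc i)" using True unfolding S_def by auto
      moreover have "e (Suc i) \<le> e i + b" using estep True by simp
      ultimately show ?thesis by simp
    next
      case False
      then have "i = k - 1" using ik by simp
      then show ?thesis using elast \<open>\<not> a - b \<le> c\<close> by simp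
    qed
    have "Q * p^(e i) \<le> Q * (p * D i)" using e3[of i] ik by simp
    also have "\<dots> = (p * Q) * D i" by simp
    also have "\<dots> \<le> p^(a-b) * D i" using pQ by simp
    finally have "Q * p^(e i) \<le> D i * p^(a-b)" by (simp add: mult.commute)
    then show ?thesis using ii Ei ik e1[of i] cb by simp
  qed
  have "reduces_to (p^a) (p^b * Q)"
  proof (rule reduces_from_M[OF pr, where M = M])
    show "p^b * Q > 0" using Qpos p2 by simp
    show "\<forall>c\<le>a. M c dvd p^b * Q"
    proof (intro allI impI)
      fix c assume c: "c \<le> a"
      have "c - E (idx c) \<le> b" using K[OF c] by linarith
      then have "p^(c - E (idx c)) dvd p^b" by (rule le_imp_power_dvd)
      moreover have "D (idx c) dvd Q" using K[OF c] Ddvd by simp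
      ultimately show "M c dvd p^b * Q" unfolding M_def by (rule mult_dvd_mono)
    qed
    show "\<forall>c\<le>a. p^b * Q \<le> p^(a-c) * M c"
    proof (intro allI impI)
      fix c assume c: "c \<le> a"
      define j where "j = idx c"
      define F where "F = E j"
      have Kc: "F \<le> c" "Q * p^F \<le> D j * p^(a-b)" using K[OF c] unfolding j_def F_def by auto
      have "p^F * (p^b * Q) = p^b * (Q * p^F)" by (simp add: mult_ac)
      also have "\<dots> \<le> p^b * (D j * p^(a-b))" using Kc by simp
      also have "\<dots> = D j * (p^b * p^(a-b))" by (simp add: mult_ac)
      also have "p^b * p^(a-b) = p^a"
      proof -
        have "b + (a-b) = a" using ba by simp
        then show ?thesis by (metis power_add)
      qed
      also have "p^a = p^F * p^(a-F)"
      proof -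
        have "F + (a-F) = a" using Kc c by simp
        then show ?thesis by (metis power_add)
      qed
      finally have "p^F * (p^b * Q) \<le> p^F * (D j * p^(a-F))" by (simp add: mult_ac)
      then have "p^b * Q \<le> D j * p^(a-F)" using p2 by simp
      also have "p^(a-F) = p^(a-c) * p^(c-F)"
      proof -
        have "a - F = (a-c) + (c-F)" using Kc c by simp
        then show ?thesis by (metis power_add)
      qed
      finally show "p^b * Q \<le> p^(a-c) * M c" unfolding M_def j_def[symmetric] F_def[symmetric]
        by (simp add: mult_ac)
    qed
    show "\<forall>c\<le>a. M c \<le> p^c"
    proof (intro allI impI)
      fix c assume c: "c \<le> a"
      have Kc: "E (idx c) \<le> c" "D (idx c) \<le> p^(E (idx c))" using K[OF c] by auto
      have "M c \<le> p^(c - E (idx c)) * p^(E (idx c))" unfolding M_def using Kc by simp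
      also have "\<dots> = p^c"
      proof -
        have "c - E (idx c) + E (idx c) = c" using Kc by simp
        then show ?thesis by (metis power_add)
      qed
      finally show "M c \<le> p^c" .
    qed
    show "\<forall>r. prime r \<and> r dvd p^b * Q \<longrightarrow> p \<le> r"
    proof (intro allI impI)
      fix r assume r: "prime r \<and> r dvd p^b * Q"
      then have "r dvd p^b \<or> r dvd Q" using prime_dvd_mult_iff by blast
      then show "p \<le> r"
      proof
        assume "r dvd p^b"
        then have "r dvd p" using r prime_dvd_power by blast
        then have "r = p" using primes_dvd_imp_eq[of r p] r pr by simp
        then show ?thesis by simp
      next
        assume "r dvd Q"
        then have "\<exists>l\<in>{1..k}. r dvd q l" unfolding Q_def using prime_dvd_prod_iff[of "{1..k}" r q] r by simp
        then obtain l where l: "l \<in> {1..k}" "r dvd q l" by blast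
        have "prime (q l)" using qprime[of l] l(1) by simp
        then have "r = q l" using primes_dvd_imp_eq[of r "q l"] r l(2) by simp
        then show ?thesis using qgt[of l] l by auto
      qed
    qed
    show "inj_on M {..a}"
    proof (rule inj_onI)
      fix c c' assume c: "c \<in> {..a}" and c': "c' \<in> {..a}" and eq: "M c = M c'"
      have Kc: "idx c \<le> k" "E (idx c) \<le> c" using K c by auto
      have Kc': "idx c' \<le> k" "E (idx c') \<le> c'" using K c' by auto
      have "c - E (idx c) = c' - E (idx c') \<and> D (idx c) = D (idx c')"
      proof (rule pow_split_eq[OF pr])
        show "p ^ (c - E (idx c)) * D (idx c) = p ^ (c' - E (idx c')) * D (idx c')" using eq unfolding M_def .
        show "\<not> p dvd D (idx c)" using Dndvd Kc by blast
        show "\<not> p dvd D (idx c')" using Dndvd Kc' by blast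
      qed
      moreover have "idx c = idx c'" using calculation Dinj Kc Kc' by blast
      ultimately show "c = c'" using Kc Kc' by simp
    qed
    show "p = 2 \<or> odd (p^b * Q)"
    proof (cases "p = 2")
      case False
      then have "p > 2" using p2 by simp
      then have op: "odd p" using pr prime_odd_nat by blast
      have oQ: "odd Q"
      proof
        assume "even Q"
        then have "\<exists>l\<in>{1..k}. 2 dvd q l" unfolding Q_def using prime_dvd_prod_iff[of "{1..k}" 2 q] by simp
        then obtain l where l: "l \<in> {1..k}" "2 dvd q l" by blast
        have "prime (q l)" using qprime[of l] l by simp
        then have "2 = q l" using primes_dvd_imp_eq[OF two_is_prime_nat _ l(2)] by blast
        moreover have "p < q l" using qgt[of l] l(1) by simp
        ultimately show False using p2 by simp
      qed
      show ?thesis using op oQ by simp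
    qed simp
  qed
  then show ?thesis unfolding b_def P_def Q_def .
qed


end
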